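(* Let $\theta$ be an angle and let $\mathcal P=(p_1,\dots,p_k)$ be a $\theta$-path from $p_1$ to $p_k$. Then $\mathcal P$ is increasing-chord, i.e., it is self-approaching both from $p_1$ to $p_k$ and from $p_k$ to $p_1$.
   Context: The slope of a segment $\overline{uv}$ is the angle of the clockwise rotation around $u$ that brings $\overline{uv}$ to coincide with the positive $x$-axis; slopes are defined modulo $360^\circ$. A segment $\overline{uv}$ (directed from $u$ to $v$) is a $\theta$-edge if its slope lies in $[\theta-45^\circ,\theta+45^\circ]$ (modulo $360^\circ$). A geometric path $(p_1,\dots,p_k)$ is a $\theta$-path from $p_1$ to $p_k$ if $\overline{p_ip_{i+1}}$ is a $\theta$-edge for every $1\le i\le k-1$. A geometric path $(v_1,\dots,v_k)$ is self-approaching from $v_1$ to $v_k$ if for every three distinct points $a,b,c$ appearing in this order along the path from $v_1$ to $v_k$ (possibly interior to edges) $|\overline{bc}|<|\overline{ac}|$, where $|\cdot|$ is Euclidean length. *)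

theory Defs
  imports "HOL-Analysis.Analysis"
begin

(* Points of the plane are complex numbers; angles are in degrees. *)

text \<open>Slope of the segment from u to v (u \<noteq> v), in degrees; defined modulo 360.
  The clockwise rotation about u bringing uv onto the positive x-axis is by the
  (counterclockwise) argument of v - u.\<close>
definition slope :: "complex \<Rightarrow> complex \<Rightarrow> real" where
  "slope u v = Arg (v - u) * 180 / pi"

definition theta_edge :: "real \<Rightarrow> complex \<Rightarrow> complex \<Rightarrow> bool" where
  "theta_edge \<theta> u v \<longleftrightarrow> u \<noteq> v \<and>
     (\<exists>m::int. \<theta> - 45 \<le> slope u v + 360 * m \<and> slope u v + 360 * m \<le> \<theta> + 45)"

definition theta_path :: "real \<Rightarrow> complex list \<Rightarrow> bool" where
  "theta_path \<theta> ps \<longleftrightarrow> ps \<noteq> [] \<and>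
     (\<forall>i. i + 1 < length ps \<longrightarrow> theta_edge \<theta> (ps ! i) (ps ! (i + 1)))"

definition path_point :: "complex list \<Rightarrow> real \<Rightarrow> complex" where
  "path_point ps s = (let i = nat \<lfloor>s\<rfloor> in
     if i + 1 < length ps then (1 - (s - real i)) *\<^sub>R ps ! i + (s - real i) *\<^sub>R ps ! (i + 1)
     else last ps)"

definition self_approaching :: "complex list \<Rightarrow> bool" where
  "self_approaching ps \<longleftrightarrow>
     (\<forall>s1 s2 s3. 0 \<le> s1 \<and> s1 < s2 \<and> s2 < s3 \<and> s3 \<le> real (length ps) - 1 \<longrightarrow>
        (let a = path_point ps s1; b = path_point ps s2; c = path_point ps s3 in
          a \<noteq> b \<and> b \<noteq> c \<and> a \<noteq> c \<longrightarrow> dist b c < dist a c))"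

definition increasing_chord :: "complex list \<Rightarrow> bool" where
  "increasing_chord ps \<longleftrightarrow> self_approaching ps \<and> self_approaching (rev ps)"

end

theory Submission
  imports Defs
begin

definition cone :: "complex \<Rightarrow> complex set" where
  "cone w = {z. \<bar>Im (z * cnj w)\<bar> \<le> Re (z * cnj w)}"

lemma cone_add: "a \<in> cone w \<Longrightarrow> b \<in> cone w \<Longrightarrow> a + b \<in> cone w"
  unfolding cone_def
  using abs_triangle_ineq[of "Im (a * cnj w)" "Im (b * cnj w)"]
  by (simp add: distrib_right)

lemma cone_scale: "a \<in> cone w \<Longrightarrow> 0 \<le> c \<Longrightarrow> of_real c * a \<in> cone w"
proof -
  assume a: "a \<in> cone w" and c: "0 \<le> c"
  have e: "Im (of_real c * a * cnj w) = c * Im (a * cnj w)" "Re (of_real c * a * cnj w) = c * Re (a * cnj w)"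
    by (simp_all add: mult.assoc)
  show ?thesis using a c unfolding cone_def by (simp only: e mem_Collect_eq abs_mult) (simp add: mult_left_mono)
qed

lemma cone_zero: "0 \<in> cone w"
  unfolding cone_def by simp

lemma cmod_add_sq: "(cmod (x + y))^2 = (cmod x)^2 + (cmod y)^2 + 2 * Re (x * cnj y)"
  unfolding cmod_power2 by (simp add: algebra_simps power2_eq_square)

lemma cone_inner:
  assumes "a \<in> cone w" "b \<in> cone w" "w \<noteq> 0"
  shows "0 \<le> Re (a * cnj b)"
proof -
  define x1 where "x1 = Re (a * cnj w)"
  define y1 where "y1 = Im (a * cnj w)"
  define x2 where "x2 = Re (b * cnj w)"
  define y2 where "y2 = Im (b * cnj w)"
  have e: "Re (a * cnj b) * (cmod w)^2 = x1 * x2 + y1 * y2"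
    unfolding x1_def x2_def y1_def y2_def cmod_power2
    by (simp add: algebra_simps power2_eq_square)
  have h1: "\<bar>y1\<bar> \<le> x1" "\<bar>y2\<bar> \<le> x2" using assms unfolding cone_def x1_def y1_def x2_def y2_def by auto
  have "\<bar>y1\<bar> * \<bar>y2\<bar> \<le> x1 * x2" by (rule mult_mono) (use h1 in auto)
  moreover have "- (y1 * y2) \<le> \<bar>y1\<bar> * \<bar>y2\<bar>" by (simp add: abs_mult[symmetric])
  ultimately have "0 \<le> Re (a * cnj b) * (cmod w)^2" using e by linarith
  moreover have "0 < (cmod w)^2" using assms(3) by simp
  ultimately show ?thesis by (simp add: zero_le_mult_iff)
qed

lemma pp_seg:
  assumes "i + 1 < length ps" "real i \<le> s" "s \<le> real i + 1"
  shows "path_point ps s = (1 - (s - real i)) *\<^sub>R ps ! i + (s - real i) *\<^sub>R ps ! (i + 1)"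
proof (cases "s < real i + 1")
  case True
  then have "\<lfloor>s\<rfloor> = int i" using assms by linarith
  then have "nat \<lfloor>s\<rfloor> = i" by simp
  then show ?thesis using assms unfolding path_point_def by simp
next
  case False
  then have s: "s = real i + 1" using assms by simp
  then have "nat \<lfloor>s\<rfloor> = i + 1" by simp
  moreover have "last ps = ps ! (i + 1)" if h: "\<not> i + 2 < length ps"
  proof -
    have "length ps = i + 2" using h assms(1) by linarith
    then show ?thesis by (subst last_conv_nth) auto
  qed
  ultimately show ?thesis using assms s unfolding path_point_def
    by auto
qed

lemma pp_seg_diff:
  assumes "i + 1 < length ps" "real i \<le> s" "s \<le> t" "t \<le> real i + 1"
  shows "path_point ps t - path_point ps s = of_real (t - s) * (ps ! (i + 1) - ps ! i)"
proof -
  have "real i \<le> t" using assms by linarith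
  have "s \<le> real i + 1" using assms by linarith
  show ?thesis
    unfolding pp_seg[OF assms(1) \<open>real i \<le> t\<close> assms(4)] pp_seg[OF assms(1,2) \<open>s \<le> real i + 1\<close>]
    by (simp add: scaleR_conv_of_real algebra_simps)
qed

lemma pp_cone:
  assumes edges: "\<forall>i. i + 1 < length ps \<longrightarrow> ps ! (i + 1) - ps ! i \<in> cone w"
  shows "0 \<le> s \<Longrightarrow> s \<le> t \<Longrightarrow> t \<le> real (length ps) - 1 \<Longrightarrow>
         path_point ps t - path_point ps s \<in> cone w"
proof (induction "nat (\<lfloor>t\<rfloor> - \<lfloor>s\<rfloor>)" arbitrary: s rule: less_induct)
  case less
  define i where "i = nat \<lfloor>s\<rfloor>"
  have i1: "real i \<le> s" "s < real i + 1" using less.prems unfolding i_def by linarith+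
  show ?case
  proof (cases "t \<le> real i + 1")
    case True
    show ?thesis
    proof (cases "i + 1 < length ps")
      case True
      have "of_real (t - s) * (ps ! (i + 1) - ps ! i) \<in> cone w"
        using edges True less.prems by (intro cone_scale) auto
      then show ?thesis
        by (subst pp_seg_diff[OF True i1(1) less.prems(2) \<open>t \<le> real i + 1\<close>])
    next
      case False
      then have "s = t" using less.prems i1 by (simp add: of_nat_diff)
      then show ?thesis by (simp add: cone_zero)
    qed
  next
    case False
    have il: "i + 1 < length ps" using False less.prems by linarith
    define m where "m = real i + 1"
    have fm: "\<lfloor>m\<rfloor> = \<lfloor>s\<rfloor> + 1" unfolding m_def i_def using less.prems by simp
    have "\<lfloor>t\<rfloor> \<ge> \<lfloor>m\<rfloor>" using False unfolding m_def by (intro floor_mono) simp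
    then have lt: "nat (\<lfloor>t\<rfloor> - \<lfloor>m\<rfloor>) < nat (\<lfloor>t\<rfloor> - \<lfloor>s\<rfloor>)" using fm by linarith
    have A: "path_point ps t - path_point ps m \<in> cone w"
      by (rule less.hyps[OF lt]) (use False less.prems in \<open>auto simp: m_def\<close>)
    have "of_real (m - s) * (ps ! (i + 1) - ps ! i) \<in> cone w"
      using edges il i1 by (intro cone_scale) (auto simp: m_def)
    then have B: "path_point ps m - path_point ps s \<in> cone w"
      by (subst pp_seg_diff[OF il i1(1), of m]) (use i1 in \<open>simp_all add: m_def\<close>)
    have "path_point ps t - path_point ps s
          = (path_point ps t - path_point ps m) + (path_point ps m - path_point ps s)" by simp
    then show ?thesis using cone_add[OF A B] by simp
  qed
qed

lemma sa_gen:
  assumes w: "w \<noteq> 0"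
    and edges: "\<forall>i. i + 1 < length ps \<longrightarrow> ps ! (i + 1) - ps ! i \<in> cone w"
  shows "self_approaching ps"
  unfolding self_approaching_def Let_def
proof (intro allI impI)
  fix s1 s2 s3 :: real
  assume h: "0 \<le> s1 \<and> s1 < s2 \<and> s2 < s3 \<and> s3 \<le> real (length ps) - 1"
    and ne: "path_point ps s1 \<noteq> path_point ps s2 \<and> path_point ps s2 \<noteq> path_point ps s3
             \<and> path_point ps s1 \<noteq> path_point ps s3"
  define a where "a = path_point ps s1"
  define b where "b = path_point ps s2"
  define c where "c = path_point ps s3"
  have ba: "b - a \<in> cone w" unfolding a_def b_def by (rule pp_cone[OF edges]) (use h in auto)
  have cb: "c - b \<in> cone w" unfolding c_def b_def by (rule pp_cone[OF edges]) (use h in auto)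
  have inn: "0 \<le> Re ((c - b) * cnj (b - a))" by (rule cone_inner[OF cb ba w])
  have "b \<noteq> a" using ne unfolding a_def b_def by metis
  then have nz: "0 < (cmod (b - a))^2" by simp
  have "(cmod (c - a))^2 = (cmod ((c - b) + (b - a)))^2" by simp
  also have "\<dots> = (cmod (c - b))^2 + (cmod (b - a))^2 + 2 * Re ((c - b) * cnj (b - a))"
    by (rule cmod_add_sq)
  finally have "(cmod (c - b))^2 < (cmod (c - a))^2" using inn nz by linarith
  then have "cmod (c - b) < cmod (c - a)" by (rule power2_less_imp_less) simp
  then show "dist b c < dist a c"
    unfolding a_def b_def c_def[symmetric] by (simp add: dist_norm norm_minus_commute)
qed

lemma sin_le_cos: assumes "\<bar>\<psi>\<bar> \<le> pi / 4" shows "\<bar>sin \<psi>\<bar> \<le> cos \<psi>"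
proof -
  have "\<bar>sin \<psi>\<bar> = sin \<bar>\<psi>\<bar>"
  proof (cases "\<psi> \<ge> 0")
    case True
    have "0 \<le> sin \<psi>" by (rule sin_ge_zero) (use True assms pi_gt_zero in auto)
    then show ?thesis using True by simp
  next
    case False
    have "0 \<le> sin (- \<psi>)" by (rule sin_ge_zero) (use False assms pi_gt_zero in auto)
    then show ?thesis using False by simp
  qed
  also have "\<dots> \<le> sin (pi / 2 - \<bar>\<psi>\<bar>)"
    by (rule sin_monotone_2pi_le) (use assms in auto)
  also have "\<dots> = cos \<bar>\<psi>\<bar>" by (simp add: sin_cos_eq)
  also have "\<dots> = cos \<psi>" by (simp add: abs_if)
  finally show ?thesis .
qed

lemma edge_cone:
  assumes "theta_edge \<theta> u v"
  shows "v - u \<in> cone (cis (\<theta> * pi / 180))"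
proof -
  define z where "z = v - u"
  define \<alpha> where "\<alpha> = \<theta> * pi / 180"
  obtain m :: int where m: "\<theta> - 45 \<le> slope u v + 360 * real_of_int m" "slope u v + 360 * real_of_int m \<le> \<theta> + 45"
    using assms unfolding theta_edge_def by blast
  define \<psi> where "\<psi> = Arg z + 2 * pi * m - \<alpha>"
  have "(\<theta> - 45) * (pi / 180) \<le> (slope u v + 360 * real_of_int m) * (pi / 180)"
    using m(1) by (intro mult_right_mono) auto
  moreover have "(slope u v + 360 * real_of_int m) * (pi / 180) \<le> (\<theta> + 45) * (pi / 180)"
    using m(2) by (intro mult_right_mono) auto
  moreover have "(slope u v + 360 * real_of_int m) * (pi / 180) = Arg z + 2 * pi * m"
    unfolding slope_def z_def by (simp add: field_simps)
  moreover have "(\<theta> - 45) * (pi / 180) = \<alpha> - pi / 4" "(\<theta> + 45) * (pi / 180) = \<alpha> + pi / 4"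
    unfolding \<alpha>_def by (simp_all add: field_simps)
  ultimately have "\<bar>\<psi>\<bar> \<le> pi / 4"
    unfolding \<psi>_def by linarith
  then have sc: "\<bar>sin \<psi>\<bar> \<le> cos \<psi>" by (rule sin_le_cos)
  have phi: "Arg z - \<alpha> = \<psi> - 2 * pi * m" unfolding \<psi>_def by simp
  have cs: "cos (Arg z - \<alpha>) = cos \<psi>" "sin (Arg z - \<alpha>) = sin \<psi>"
    unfolding phi by (simp_all add: cos_diff sin_diff)
  have zz: "rcis (cmod z) (Arg z) = z" by (rule rcis_cmod_Arg)
  have "z * cnj (cis \<alpha>) = rcis (cmod z) (Arg z) * rcis 1 (- \<alpha>)"
    unfolding zz by (simp add: rcis_def cis_cnj)
  also have "\<dots> = rcis (cmod z) (Arg z - \<alpha>)" by (simp add: rcis_mult)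
  finally have eq: "z * cnj (cis \<alpha>) = rcis (cmod z) (Arg z - \<alpha>)" .
  have "\<bar>cmod z * sin \<psi>\<bar> \<le> cmod z * cos \<psi>"
    using sc by (simp add: abs_mult mult_left_mono)
  moreover have "Re (z * cnj (cis \<alpha>)) = cmod z * cos \<psi>" "Im (z * cnj (cis \<alpha>)) = cmod z * sin \<psi>"
    by (simp_all only: eq Re_rcis Im_rcis cs)
  ultimately show ?thesis unfolding cone_def z_def[symmetric] \<alpha>_def[symmetric]
    by simp
qed

theorem lemma3:
  fixes \<theta> :: real and ps :: "complex list"
  assumes "theta_path \<theta> ps"
  shows "self_approaching ps \<and> self_approaching (rev ps)"
proof
  define w where "w = cis (\<theta> * pi / 180)"
  have w0: "w \<noteq> 0" unfolding w_def by (metis cis_neq_zero)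
  have E: "\<forall>i. i + 1 < length ps \<longrightarrow> ps ! (i + 1) - ps ! i \<in> cone w"
    using assms edge_cone unfolding theta_path_def w_def by blast
  show "self_approaching ps" by (rule sa_gen[OF w0 E])
  have "\<forall>i. i + 1 < length (rev ps) \<longrightarrow> rev ps ! (i + 1) - rev ps ! i \<in> cone (- w)"
  proof (intro allI impI)
    fix i assume i: "i + 1 < length (rev ps)"
    define j where "j = length ps - 2 - i"
    have j: "j + 1 < length ps" "length ps - Suc (i + 1) = j" "length ps - Suc i = j + 1"
      using i unfolding j_def by auto
    have "ps ! (j + 1) - ps ! j \<in> cone w" using E j by blast
    then show "rev ps ! (i + 1) - rev ps ! i \<in> cone (- w)"
      using i j by (simp add: rev_nth cone_def algebra_simps)
  qed
  then show "self_approaching (rev ps)" by (rule sa_gen[rotated]) (use w0 in simp)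
qed

end
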